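(* There exists an absolute constant $c>0$ such that for every $n$ and every convex body $K$ of volume $1$ in $\mathbb{R}^n$, $$\int_K\varphi_{\mu_K}(x)\,dx\geq e^{-cn},$$ where $\mu_K$ is the uniform (Lebesgue) probability measure on $K$.
   Context: A convex body is a compact convex set with non-empty interior. $\varphi_\mu(x)=\inf\{\mu(H): H$ a half-space of $\mathbb{R}^n$ containing $x\}$ (Tukey's half-space depth). *)

theory Defs
  imports "HOL-Analysis.Analysis"
begin

text \<open>Euclidean space R^n, for a dimension n that is quantified inside the statement,
  is represented by the extensional functions on the index set {..<n}
  (points x :: nat => real with x i = undefined for i >= n).\<close>

definition Rn :: "nat \<Rightarrow> (nat \<Rightarrow> real) set" where
  "Rn n = PiE {..<n} (\<lambda>_. UNIV)"

definition lebn :: "nat \<Rightarrow> (nat \<Rightarrow> real) measure" where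
  "lebn n = PiM {..<n} (\<lambda>_. lborel)"

definition convex_n :: "nat \<Rightarrow> (nat \<Rightarrow> real) set \<Rightarrow> bool" where
  "convex_n n K \<longleftrightarrow> K \<subseteq> Rn n \<and>
     (\<forall>x\<in>K. \<forall>y\<in>K. \<forall>t::real. 0 \<le> t \<and> t \<le> 1 \<longrightarrow>
        restrict (\<lambda>i. t * x i + (1 - t) * y i) {..<n} \<in> K)"

text \<open>Convex body: compact convex set with non-empty interior (interior taken in R^n,
  i.e. relative to the subspace topology of Rn n inside the product topology).\<close>
definition convex_body :: "nat \<Rightarrow> (nat \<Rightarrow> real) set \<Rightarrow> bool" where
  "convex_body n K \<longleftrightarrow> convex_n n K \<and> compact K \<and>
     (\<exists>U. openin (top_of_set (Rn n)) U \<and> U \<noteq> {} \<and> U \<subseteq> K)"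

definition halfspace_n :: "nat \<Rightarrow> (nat \<Rightarrow> real) set \<Rightarrow> bool" where
  "halfspace_n n H \<longleftrightarrow> (\<exists>a b. (\<exists>i<n. a i \<noteq> 0) \<and>
      H = {x \<in> Rn n. (\<Sum>i<n. a i * x i) \<le> b})"

definition tukey_depth :: "nat \<Rightarrow> (nat \<Rightarrow> real) measure \<Rightarrow> (nat \<Rightarrow> real) \<Rightarrow> real" where
  "tukey_depth n \<mu> x = Inf {measure \<mu> H | H. halfspace_n n H \<and> x \<in> H}"

end

theory Submission
  imports Defs
begin

lemma lebn_affine:
  fixes t :: "nat \<Rightarrow> real" assumes c: "c \<noteq> 0"
  shows "lebn n = density (distr (lebn n) (lebn n) (\<lambda>x. restrict (\<lambda>i. t i + c * x i) {..<n})) (\<lambda>_. ennreal (\<bar>c\<bar> ^ n))"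
proof -
  interpret product_sigma_finite "\<lambda>_::nat. lborel :: real measure" by standard
  let ?T = "\<lambda>x. restrict (\<lambda>i. t i + c * x i) {..<n}"
  have Tm: "?T \<in> measurable (lebn n) (lebn n)"
    unfolding lebn_def by (intro measurable_restrict) measurable
  have one: "emeasure lborel (A::real set) = ennreal \<bar>c\<bar> * emeasure lborel ((\<lambda>u. t' + c * u) -` A)"
    if "A \<in> sets borel" for A t'
  proof -
    have "emeasure lborel A = emeasure (density (distr lborel borel (\<lambda>u. t' + c * u)) (\<lambda>_. ennreal \<bar>c\<bar>)) A"
      using lborel_real_affine[OF c, of t'] by simp
    also have "\<dots> = ennreal \<bar>c\<bar> * emeasure (distr lborel borel (\<lambda>u. t' + c * u)) A"
      using that by (simp add: emeasure_density nn_integral_cmult_indicator)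
    also have "\<dots> = ennreal \<bar>c\<bar> * emeasure lborel ((\<lambda>u. t' + c * u) -` A)"
      using that by (simp add: emeasure_distr)
    finally show ?thesis .
  qed
  show ?thesis unfolding lebn_def
  proof (rule PiM_eqI[symmetric])
    show "finite {..<n}" by simp
    show "sets (density (distr (Pi\<^sub>M {..<n} (\<lambda>_. lborel)) (Pi\<^sub>M {..<n} (\<lambda>_. lborel)) ?T) (\<lambda>_. ennreal (\<bar>c\<bar> ^ n))) = sets (Pi\<^sub>M {..<n} (\<lambda>_. lborel))"
      by simp
    fix A :: "nat \<Rightarrow> real set" assume A: "\<And>i. i \<in> {..<n} \<Longrightarrow> A i \<in> sets lborel"
    have prem: "(\<lambda>u. t i + c * u) -` A i \<in> sets borel" if "i < n" for i
    proof -
      have "(\<lambda>u. t i + c * u) -` A i \<inter> space borel \<in> sets borel"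
        by (rule measurable_sets[of _ borel borel]) (use A that in auto)
      then show ?thesis by simp
    qed
    have PA: "Pi\<^sub>E {..<n} A \<in> sets (Pi\<^sub>M {..<n} (\<lambda>_. lborel))"
      using A by (intro sets_PiM_I_finite) auto
    have pre: "?T -` Pi\<^sub>E {..<n} A \<inter> space (Pi\<^sub>M {..<n} (\<lambda>_. lborel)) = Pi\<^sub>E {..<n} (\<lambda>i. (\<lambda>u. t i + c * u) -` A i)"
      by (auto simp: space_PiM PiE_iff)
    have "emeasure (density (distr (Pi\<^sub>M {..<n} (\<lambda>_. lborel)) (Pi\<^sub>M {..<n} (\<lambda>_. lborel)) ?T) (\<lambda>_. ennreal (\<bar>c\<bar> ^ n))) (Pi\<^sub>E {..<n} A)
       = ennreal (\<bar>c\<bar> ^ n) * emeasure (distr (Pi\<^sub>M {..<n} (\<lambda>_. lborel)) (Pi\<^sub>M {..<n} (\<lambda>_. lborel)) ?T) (Pi\<^sub>E {..<n} A)"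
      using PA by (simp add: emeasure_density nn_integral_cmult_indicator)
    also have "\<dots> = ennreal (\<bar>c\<bar> ^ n) * emeasure (Pi\<^sub>M {..<n} (\<lambda>_. lborel)) (Pi\<^sub>E {..<n} (\<lambda>i. (\<lambda>u. t i + c * u) -` A i))"
      using PA Tm pre unfolding lebn_def by (simp add: emeasure_distr)
    also have "\<dots> = ennreal (\<bar>c\<bar> ^ n) * (\<Prod>i<n. emeasure lborel ((\<lambda>u. t i + c * u) -` A i))"
      using A by (subst emeasure_PiM) (auto simp: lessThan_def intro: prem)
    also have "\<dots> = (\<Prod>i<n. ennreal \<bar>c\<bar> * emeasure lborel ((\<lambda>u. t i + c * u) -` A i))"
      by (simp add: prod.distrib ennreal_power)
    also have "\<dots> = (\<Prod>i<n. emeasure lborel (A i))"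
      using A by (intro prod.cong refl one[symmetric]) auto
    finally show "emeasure (density (distr (Pi\<^sub>M {..<n} (\<lambda>_. lborel)) (Pi\<^sub>M {..<n} (\<lambda>_. lborel)) ?T) (\<lambda>_. ennreal (\<bar>c\<bar> ^ n))) (Pi\<^sub>E {..<n} A) = (\<Prod>i\<in>{..<n}. emeasure lborel (A i))" by simp
  qed
qed

lemma space_lebn: "space (lebn n) = Rn n"
  by (simp add: lebn_def Rn_def space_PiM)

lemma sets_lebn_cong[measurable_cong]: "sets (lebn n) = sets (PiM {..<n} (\<lambda>_. lborel))"
  by (simp add: lebn_def)

lemma lebn_sf: "sigma_finite_measure (lebn n)"
proof -
  interpret product_sigma_finite "\<lambda>_::nat. lborel :: real measure" by standard
  interpret finite_product_sigma_finite "\<lambda>_::nat. lborel :: real measure" "{..<n}" by standard simp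
  show ?thesis unfolding lebn_def by (rule sigma_finite_measure_axioms)
qed

lemma affine_meas:
  fixes t :: "nat \<Rightarrow> real"
  shows "(\<lambda>x. restrict (\<lambda>i. t i + c * x i) {..<n}) \<in> measurable (lebn n) (lebn n)"
  unfolding lebn_def by (intro measurable_restrict) measurable

lemma lebn_preserve:
  fixes t :: "nat \<Rightarrow> real"
  assumes A: "A \<in> sets (lebn n)"
  shows "emeasure (lebn n) ((\<lambda>x. restrict (\<lambda>i. t i + (-1) * x i) {..<n}) -` A \<inter> space (lebn n)) = emeasure (lebn n) A"
proof -
  let ?T = "\<lambda>x. restrict (\<lambda>i. t i + (-1) * x i) {..<n}"
  have "emeasure (lebn n) A = emeasure (density (distr (lebn n) (lebn n) ?T) (\<lambda>_. ennreal (\<bar>-1::real\<bar> ^ n))) A"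
    using lebn_affine[of "-1" n t] by simp
  also have "\<dots> = emeasure (distr (lebn n) (lebn n) ?T) A"
    using A by (simp add: emeasure_density nn_integral_indicator)
  also have "\<dots> = emeasure (lebn n) (?T -` A \<inter> space (lebn n))"
    using A affine_meas by (simp add: emeasure_distr)
  finally show ?thesis by simp
qed

lemma lebn_scale:
  fixes t :: "nat \<Rightarrow> real"
  assumes A: "A \<in> sets (lebn n)"
  shows "(\<integral>\<^sup>+ x. indicator A (restrict (\<lambda>i. t i + 2 * x i) {..<n}) \<partial>lebn n) = ennreal (1 / 2 ^ n) * emeasure (lebn n) A"
proof -
  let ?T = "\<lambda>x. restrict (\<lambda>i. t i + 2 * x i) {..<n}"
  have m: "(\<lambda>x. indicator A (?T x) :: ennreal) \<in> borel_measurable (lebn n)"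
    using affine_meas[of t 2 n] A by measurable
  have "emeasure (lebn n) A = (\<integral>\<^sup>+ z. indicator A z \<partial>lebn n)"
    using A by simp
  also have "\<dots> = (\<integral>\<^sup>+ z. indicator A z \<partial>density (distr (lebn n) (lebn n) ?T) (\<lambda>_. ennreal (\<bar>2::real\<bar> ^ n)))"
    using lebn_affine[of "2" n t] by simp
  also have "\<dots> = (\<integral>\<^sup>+ z. ennreal (2 ^ n) * indicator A z \<partial>distr (lebn n) (lebn n) ?T)"
    using A by (subst nn_integral_density) auto
  also have "\<dots> = (\<integral>\<^sup>+ x. ennreal (2 ^ n) * indicator A (?T x) \<partial>lebn n)"
    using A affine_meas by (subst nn_integral_distr) auto
  also have "\<dots> = ennreal (2 ^ n) * (\<integral>\<^sup>+ x. indicator A (?T x) \<partial>lebn n)"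
    using m by (simp add: nn_integral_cmult)
  finally have e: "emeasure (lebn n) A = ennreal (2 ^ n) * (\<integral>\<^sup>+ x. indicator A (?T x) \<partial>lebn n)" .
  have "ennreal (1 / 2 ^ n) * emeasure (lebn n) A = (ennreal (1 / 2 ^ n) * ennreal (2 ^ n)) * (\<integral>\<^sup>+ x. indicator A (?T x) \<partial>lebn n)"
    by (simp add: e mult.assoc)
  also have "ennreal (1 / 2 ^ n) * ennreal (2 ^ n) = 1"
    by (simp flip: ennreal_mult)
  finally show ?thesis by (simp only: mult_1 eq_commute)
qed

lemma depth_lower:
  assumes n: "n \<ge> 1" and K: "K \<in> sets (lebn n)" "emeasure (lebn n) K = 1" and x: "x \<in> Rn n"
  shows "emeasure (lebn n) {y \<in> space (lebn n). y \<in> K \<and> restrict (\<lambda>i. 2 * x i - y i) {..<n} \<in> K} / 2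
     \<le> ennreal (tukey_depth n (uniform_measure (lebn n) K) x)"
proof -
  define R where "R = (\<lambda>y::nat\<Rightarrow>real. restrict (\<lambda>i. 2 * x i - y i) {..<n})"
  define S where "S = {y \<in> space (lebn n). y \<in> K \<and> R y \<in> K}"
  have Req: "R = (\<lambda>y. restrict (\<lambda>i. (2 * x i) + (-1) * y i) {..<n})"
    unfolding R_def by (auto simp: fun_eq_iff)
  have Rm: "R \<in> measurable (lebn n) (lebn n)" unfolding Req by (rule affine_meas)
  have Rpres: "emeasure (lebn n) (R -` A \<inter> space (lebn n)) = emeasure (lebn n) A"
    if "A \<in> sets (lebn n)" for A
    unfolding Req by (rule lebn_preserve[OF that])
  have Rsp: "R y \<in> space (lebn n)" for y by (simp add: R_def space_lebn Rn_def)
  have RR: "R (R y) = y" if "y \<in> space (lebn n)" for y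
    using that by (auto simp: R_def space_lebn Rn_def PiE_iff extensional_def fun_eq_iff)
  have Seq: "S = K \<inter> (R -` K \<inter> space (lebn n))"
    unfolding S_def using K(1) sets.sets_into_space by blast
  have Ssets: "S \<in> sets (lebn n)"
    unfolding Seq using K(1) Rm by (intro sets.Int measurable_sets) auto
  have SK: "S \<subseteq> K" unfolding S_def by auto
  have Sfin: "emeasure (lebn n) S \<le> 1"
    using emeasure_mono[OF SK K(1)] K(2) by simp
  have unif: "emeasure (uniform_measure (lebn n) K) H = emeasure (lebn n) (H \<inter> K)"
    if "H \<in> sets (lebn n)" for H
    using that K by (simp add: emeasure_uniform_measure Int_commute divide_ennreal_def)
  have key: "emeasure (lebn n) S / 2 \<le> ennreal (measure (uniform_measure (lebn n) K) H)"
    if H: "halfspace_n n H" "x \<in> H" for H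
  proof -
    obtain a b where ab: "H = {z \<in> Rn n. (\<Sum>i<n. a i * z i) \<le> b}"
      using H(1) unfolding halfspace_n_def by blast
    have Hs: "H \<in> sets (lebn n)"
    proof -
      have "{z \<in> space (lebn n). (\<Sum>i<n. a i * z i) \<le> b} \<in> sets (lebn n)"
        unfolding lebn_def by measurable
      then show ?thesis by (simp add: ab space_lebn)
    qed
    have HS: "H \<inter> S \<in> sets (lebn n)" using Hs Ssets by auto
    have cover: "S \<subseteq> (H \<inter> S) \<union> (R -` (H \<inter> S) \<inter> space (lebn n))"
    proof
      fix y assume y: "y \<in> S"
      then have ysp: "y \<in> space (lebn n)" and yK: "y \<in> K" and RyK: "R y \<in> K" by (auto simp: S_def)
      show "y \<in> (H \<inter> S) \<union> (R -` (H \<inter> S) \<inter> space (lebn n))"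
      proof (cases "y \<in> H")
        case True then show ?thesis using y by auto
      next
        case False
        have xb: "(\<Sum>i<n. a i * x i) \<le> b" using H(2) ab by auto
        have yb: "\<not> (\<Sum>i<n. a i * y i) \<le> b" using False ysp ab space_lebn by auto
        have "(\<Sum>i<n. a i * R y i) = 2 * (\<Sum>i<n. a i * x i) - (\<Sum>i<n. a i * y i)"
          by (simp add: R_def algebra_simps sum_distrib_left sum_subtractf)
        then have "(\<Sum>i<n. a i * R y i) \<le> b" using xb yb by linarith
        then have "R y \<in> H" using ab Rsp space_lebn by auto
        moreover have "R y \<in> S" using Rsp RyK RR[OF ysp] yK by (auto simp: S_def)
        ultimately show ?thesis using ysp by auto
      qed
    qed
    have RHS: "R -` (H \<inter> S) \<inter> space (lebn n) \<in> sets (lebn n)"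
      by (rule measurable_sets[OF Rm HS])
    have "emeasure (lebn n) S \<le> emeasure (lebn n) ((H \<inter> S) \<union> (R -` (H \<inter> S) \<inter> space (lebn n)))"
      by (rule emeasure_mono[OF cover sets.Un[OF HS RHS]])
    also have "\<dots> \<le> emeasure (lebn n) (H \<inter> S) + emeasure (lebn n) (R -` (H \<inter> S) \<inter> space (lebn n))"
      by (rule emeasure_subadditive[OF HS RHS])
    also have "\<dots> = 2 * emeasure (lebn n) (H \<inter> S)"
      using Rpres[OF HS] by (simp add: mult_2)
    also have "emeasure (lebn n) (H \<inter> S) \<le> emeasure (lebn n) (H \<inter> K)"
      using SK Hs K(1) by (intro emeasure_mono) auto
    also have "emeasure (lebn n) (H \<inter> K) = emeasure (uniform_measure (lebn n) K) H"
      using unif[OF Hs] by simp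
    also have "\<dots> = ennreal (measure (uniform_measure (lebn n) K) H)"
    proof -
      have "emeasure (uniform_measure (lebn n) K) H \<le> 1"
        using unif[OF Hs] emeasure_mono[of "H \<inter> K" K "lebn n"] K by auto
      then show ?thesis by (intro emeasure_eq_ennreal_measure) (auto simp: top_unique)
    qed
    finally have "emeasure (lebn n) S \<le> 2 * ennreal (measure (uniform_measure (lebn n) K) H)"
      by (simp add: mult_left_mono)
    then show ?thesis
      by (metis ennreal_divide_times mult.commute ennreal_times_divide divide_le_posI_ennreal zero_less_numeral ennreal_numeral_less_top)
  qed
  define D where "D = {measure (uniform_measure (lebn n) K) H | H. halfspace_n n H \<and> x \<in> H}"
  define v where "v = enn2real (emeasure (lebn n) S) / 2"
  have Sv: "emeasure (lebn n) S / 2 = ennreal v"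
  proof -
    have "emeasure (lebn n) S = ennreal (enn2real (emeasure (lebn n) S))"
      using le_less_trans[OF Sfin ennreal_one_less_top] by simp
    then show ?thesis unfolding v_def
      by (metis divide_ennreal enn2real_nonneg zero_less_numeral ennreal_numeral)
  qed
  have ne: "D \<noteq> {}"
  proof -
    define a where "a = (\<lambda>i::nat. if i = 0 then 1 else (0::real))"
    define H0 where "H0 = {z \<in> Rn n. (\<Sum>i<n. a i * z i) \<le> (\<Sum>i<n. a i * x i)}"
    have "halfspace_n n H0" unfolding halfspace_n_def H0_def
      using n by (intro exI[of _ a] exI[of _ "\<Sum>i<n. a i * x i"]) (auto simp: a_def)
    moreover have "x \<in> H0" using x by (simp add: H0_def)
    ultimately show ?thesis unfolding D_def by blast
  qed
  have "v \<le> Inf D"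
  proof (rule cInf_greatest[OF ne])
    fix d assume "d \<in> D"
    then obtain H where H: "halfspace_n n H" "x \<in> H" and d: "d = measure (uniform_measure (lebn n) K) H"
      unfolding D_def by blast
    have "ennreal v \<le> ennreal d" using key[OF H] Sv d by simp
    then show "v \<le> d" using d by (simp add: ennreal_le_iff measure_nonneg)
  qed
  then have "ennreal v \<le> ennreal (tukey_depth n (uniform_measure (lebn n) K) x)"
    unfolding tukey_depth_def D_def by (rule ennreal_leI)
  then show ?thesis using Sv unfolding S_def R_def by simp
qed

lemma exp_bound: "exp (- 2 * real n) \<le> 1 / 2 ^ n / 2" if "n \<ge> 1" for n :: nat
proof -
  have e1: "2 \<le> exp (1::real)" using exp_ge_add_one_self[of 1] by simp
  have "exp (2 * real n) = exp 1 ^ (2 * n)"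
    by (metis exp_of_nat_mult mult.right_neutral of_nat_mult of_nat_numeral)
  also have "\<dots> \<ge> 2 ^ (2 * n)" using e1 by (intro power_mono) auto
  finally have a: "(2::real) ^ (2 * n) \<le> exp (2 * real n)" .
  have "(2::real) ^ (n + 1) \<le> 2 ^ (2 * n)" using that by (intro power_increasing) auto
  with a have b: "(2::real) ^ (n + 1) \<le> exp (2 * real n)" by linarith
  have "exp (- 2 * real n) = 1 / exp (2 * real n)" by (simp add: exp_minus field_simps)
  also have "\<dots> \<le> 1 / 2 ^ (n + 1)" using b by (intro divide_left_mono) auto
  also have "\<dots> = 1 / 2 ^ n / 2" by simp
  finally show ?thesis .
qed

theorem proposition4p1:
  shows "\<exists>c>0. \<forall>n::nat. \<forall>K. n \<ge> 1 \<and> convex_body n K \<and> emeasure (lebn n) K = 1 \<longrightarrow>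
     (\<integral>\<^sup>+ x \<in> K. ennreal (tukey_depth n (uniform_measure (lebn n) K) x) \<partial>lebn n)
        \<ge> ennreal (exp (- c * real n))"
proof (intro exI[of _ 2] conjI allI impI)
  fix n :: nat and K
  assume asm: "n \<ge> 1 \<and> convex_body n K \<and> emeasure (lebn n) K = 1"
  then have n: "n \<ge> 1" and cb: "convex_body n K" and K1: "emeasure (lebn n) K = 1" by auto
  have Ks: "K \<in> sets (lebn n)"
    using K1 emeasure_notin_sets by fastforce
  have conv: "\<And>x y t. x \<in> K \<Longrightarrow> y \<in> K \<Longrightarrow> 0 \<le> t \<Longrightarrow> t \<le> 1 \<Longrightarrow> restrict (\<lambda>i. t * x i + (1 - t) * y i) {..<n} \<in> K"
    and KR: "K \<subseteq> Rn n"
    using cb unfolding convex_body_def convex_n_def by auto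
  interpret P: pair_sigma_finite "lebn n" "lebn n"
    using lebn_sf by (simp add: pair_sigma_finite_def)
  define R where "R = (\<lambda>(x::nat\<Rightarrow>real) (y::nat\<Rightarrow>real). restrict (\<lambda>i. 2 * x i - y i) {..<n})"
  define F where "F = (\<lambda>x y. indicator K y * indicator K (R x y) :: ennreal)"
  have Rm: "(\<lambda>p. R (fst p) (snd p)) \<in> measurable (lebn n \<Otimes>\<^sub>M lebn n) (lebn n)"
    unfolding R_def lebn_def by (intro measurable_restrict) measurable
  have Fm: "case_prod F \<in> borel_measurable (lebn n \<Otimes>\<^sub>M lebn n)"
  proof -
    have "(\<lambda>p. indicator K (R (fst p) (snd p)) :: ennreal) \<in> borel_measurable (lebn n \<Otimes>\<^sub>M lebn n)"
      using measurable_compose[OF Rm borel_measurable_indicator[OF Ks]] by simp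
    moreover have "(\<lambda>p. indicator K (snd p) :: ennreal) \<in> borel_measurable (lebn n \<Otimes>\<^sub>M lebn n)"
      using Ks by measurable
    ultimately show ?thesis unfolding F_def by (simp add: case_prod_beta')
  qed
  have mid: "x \<in> K" if x: "x \<in> Rn n" and y: "y \<in> K" and Ry: "R x y \<in> K" for x y
  proof -
    have "restrict (\<lambda>i. (1/2) * y i + (1 - 1/2) * R x y i) {..<n} \<in> K" using conv[OF y Ry, of "1/2"] by simp
    moreover have "restrict (\<lambda>i. (1/2) * y i + (1 - 1/2) * R x y i) {..<n} = x"
      using x by (auto simp: R_def Rn_def PiE_iff extensional_def fun_eq_iff field_simps)
    ultimately show ?thesis by simp
  qed
  have V: "emeasure (lebn n) {y \<in> space (lebn n). y \<in> K \<and> R x y \<in> K} = (\<integral>\<^sup>+ y. F x y \<partial>lebn n)"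
    if x: "x \<in> space (lebn n)" for x
  proof -
    have Rx: "(\<lambda>y. R x y) \<in> measurable (lebn n) (lebn n)"
      using measurable_Pair2[OF Rm x] by simp
    have "{y \<in> space (lebn n). y \<in> K \<and> R x y \<in> K} = K \<inter> ((\<lambda>y. R x y) -` K \<inter> space (lebn n))"
      using sets.sets_into_space[OF Ks] by auto
    then have ms: "{y \<in> space (lebn n). y \<in> K \<and> R x y \<in> K} \<in> sets (lebn n)"
      using measurable_sets[OF Rx Ks] Ks by auto
    have "emeasure (lebn n) {y \<in> space (lebn n). y \<in> K \<and> R x y \<in> K}
       = (\<integral>\<^sup>+ y. indicator {y \<in> space (lebn n). y \<in> K \<and> R x y \<in> K} y \<partial>lebn n)"
      using ms by simp
    also have "\<dots> = (\<integral>\<^sup>+ y. F x y \<partial>lebn n)"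
      by (intro nn_integral_cong) (auto simp: F_def indicator_def)
    finally show ?thesis .
  qed
  have step1: "(\<integral>\<^sup>+ x. (\<integral>\<^sup>+ y. F x y \<partial>lebn n) / 2 \<partial>lebn n)
      \<le> (\<integral>\<^sup>+ x \<in> K. ennreal (tukey_depth n (uniform_measure (lebn n) K) x) \<partial>lebn n)"
  proof (intro nn_integral_mono)
    fix x assume x: "x \<in> space (lebn n)"
    show "(\<integral>\<^sup>+ y. F x y \<partial>lebn n) / 2 \<le> ennreal (tukey_depth n (uniform_measure (lebn n) K) x) * indicator K x"
    proof (cases "x \<in> K")
      case True
      then show ?thesis
        using depth_lower[OF n Ks K1, of x] KR V[OF x] by (auto simp: R_def)
    next
      case False
      have e: "{y \<in> space (lebn n). y \<in> K \<and> R x y \<in> K} = {}"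
        using mid[of x] False x space_lebn by auto
      have "(\<integral>\<^sup>+ y. F x y \<partial>lebn n) = 0" using V[OF x] unfolding e by simp
      then show ?thesis by simp
    qed
  qed
  have inner: "(\<integral>\<^sup>+ x. F x y \<partial>lebn n) = indicator K y * ennreal (1 / 2 ^ n)" for y
  proof -
    have Req: "(\<lambda>x. R x y) = (\<lambda>x. restrict (\<lambda>i. (- y i) + 2 * x i) {..<n})"
      by (auto simp: R_def fun_eq_iff)
    have mm: "(\<lambda>x. indicator K (R x y) :: ennreal) \<in> borel_measurable (lebn n)"
    proof -
      have "(\<lambda>x. R x y) \<in> measurable (lebn n) (lebn n)"
        unfolding Req by (rule affine_meas)
      from measurable_compose[OF this borel_measurable_indicator[OF Ks]] show ?thesis by simp
    qed
    have "(\<integral>\<^sup>+ x. F x y \<partial>lebn n) = indicator K y * (\<integral>\<^sup>+ x. indicator K (R x y) \<partial>lebn n)"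
      unfolding F_def using mm by (rule nn_integral_cmult)
    also have "(\<integral>\<^sup>+ x. indicator K (R x y) \<partial>lebn n) = ennreal (1 / 2 ^ n)"
      using lebn_scale[OF Ks, of "\<lambda>i. - y i"] K1 Req by (simp add: R_def)
    finally show ?thesis .
  qed
  have total: "(\<integral>\<^sup>+ x. (\<integral>\<^sup>+ y. F x y \<partial>lebn n) \<partial>lebn n) = ennreal (1 / 2 ^ n)"
  proof -
    have "(\<integral>\<^sup>+ x. (\<integral>\<^sup>+ y. F x y \<partial>lebn n) \<partial>lebn n) = (\<integral>\<^sup>+ y. (\<integral>\<^sup>+ x. F x y \<partial>lebn n) \<partial>lebn n)"
      using P.Fubini'[OF Fm] by simp
    also have "\<dots> = (\<integral>\<^sup>+ y. indicator K y * ennreal (1 / 2 ^ n) \<partial>lebn n)"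
      by (simp add: inner)
    also have "\<dots> = ennreal (1 / 2 ^ n) * emeasure (lebn n) K"
      using Ks by (simp add: nn_integral_multc mult.commute)
    finally show ?thesis using K1 by simp
  qed
  have "(\<integral>\<^sup>+ x. (\<integral>\<^sup>+ y. F x y \<partial>lebn n) / 2 \<partial>lebn n) = ennreal (1 / 2 ^ n) / 2"
    using nn_integral_divide[OF sigma_finite_measure.borel_measurable_nn_integral[OF lebn_sf Fm]] total by simp
  also have "\<dots> = ennreal (1 / 2 ^ n) / ennreal 2" by simp
  also have "\<dots> = ennreal (1 / 2 ^ n / 2)"
    by (rule divide_ennreal) auto
  finally have "ennreal (1 / 2 ^ n / 2) \<le> (\<integral>\<^sup>+ x \<in> K. ennreal (tukey_depth n (uniform_measure (lebn n) K) x) \<partial>lebn n)"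
    using step1 by simp
  moreover have "ennreal (exp (- 2 * real n)) \<le> ennreal (1 / 2 ^ n / 2)"
    using exp_bound[OF n] by (rule ennreal_leI)
  ultimately show "ennreal (exp (- 2 * real n)) \<le> (\<integral>\<^sup>+ x \<in> K. ennreal (tukey_depth n (uniform_measure (lebn n) K) x) \<partial>lebn n)"
    by (rule order_trans[rotated])
qed simp

end
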